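(* Let $\Lambda=\{\lambda_n\}_{n\ge1}\subset\mathbb{D}$ be a Blaschke sequence of distinct points, $h\in H^2$, and $n\ge1$. Then for each $\zeta\in\mathbb{T}$, $$(A_{\overline{h}}\gamma_n)(\zeta)=\sqrt{1-|\lambda_n|^2}\sum_{l=1}^n\frac{\overline{h(\lambda_l)}}{1-\overline{\lambda_l}\zeta}\,\frac{1}{\overline{(B_n)_{\lambda_l}(\lambda_l)}}\,\frac{1-|\lambda_l|^2}{1-\overline{\lambda_l}\lambda_n},$$ where $(B_n)_{\lambda_l}=\prod_{k=1,k\ne l}^nb_{\lambda_k}$.
   Context: $\mathbb{D}$ is the open unit disk, $\mathbb{T}$ the unit circle, $H^2$ the Hardy space. $I$ denotes the Blaschke product with zeros $\Lambda$, $K_I=H^2\ominus IH^2$, $P_I$ the orthogonal projection of $L^2(\mathbb{T})$ onto $K_I$, and $A_{\overline{h}}f=P_I(\overline{h}f)$. For $\lambda\in\mathbb{D}$, $b_\lambda(z)=\frac{z-\lambda}{1-\overline{\lambda}z}$, and $\gamma_n(z)=\frac{\sqrt{1-|\lambda_n|^2}}{1-\overline{\lambda_n}z}\prod_{k=1}^{n-1}b_{\lambda_k}(z)$. With $B_n=\prod_{k=1}^nb_{\lambda_k}$, $A_{\overline{h}}\gamma_n$ lies in $K_{B_n}$, a space of rational functions with no poles in the closed disk, and $(A_{\overline{h}}\gamma_n)(\zeta)$ is the value of this rational function at $\zeta$. *)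

theory Defs
  imports "HOL-Analysis.Analysis"
begin

text \<open>Hardy space H^2 of the disk, represented by Taylor coefficient sequences.\<close>

definition H2 :: "(nat \<Rightarrow> complex) set" where
  "H2 = {a. summable (\<lambda>k. (cmod (a k))^2)}"

definition hval :: "(nat \<Rightarrow> complex) \<Rightarrow> complex \<Rightarrow> complex" where
  "hval a z = (\<Sum>k. a k * z ^ k)"

definition H2_inner :: "(nat \<Rightarrow> complex) \<Rightarrow> (nat \<Rightarrow> complex) \<Rightarrow> complex" where
  "H2_inner a b = (\<Sum>k. a k * cnj (b k))"

definition coeffs :: "(complex \<Rightarrow> complex) \<Rightarrow> (nat \<Rightarrow> complex)" where
  "coeffs f = (THE a. a \<in> H2 \<and> (\<forall>z\<in>ball 0 1. f z = hval a z))"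

definition blaschke_seq :: "(nat \<Rightarrow> complex) \<Rightarrow> bool" where
  "blaschke_seq lam \<longleftrightarrow> (\<forall>n\<ge>1. lam n \<in> ball 0 1) \<and> inj_on lam {1..}
     \<and> summable (\<lambda>n. 1 - cmod (lam (Suc n)))"

definition bfac :: "complex \<Rightarrow> complex \<Rightarrow> complex" where
  "bfac l z = (z - l) / (1 - cnj l * z)"

definition nbfac :: "complex \<Rightarrow> complex \<Rightarrow> complex" where
  "nbfac l z = (if l = 0 then z else (complex_of_real (cmod l) / l) * ((l - z) / (1 - cnj l * z)))"

definition blaschke_prod :: "(nat \<Rightarrow> complex) \<Rightarrow> complex \<Rightarrow> complex" where
  "blaschke_prod lam z = (\<Prod>n. nbfac (lam (Suc n)) z)"

definition IH2 :: "(nat \<Rightarrow> complex) \<Rightarrow> (nat \<Rightarrow> complex) set" where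
  "IH2 lam = {a \<in> H2. \<exists>f\<in>H2. \<forall>z\<in>ball 0 1. hval a z = blaschke_prod lam z * hval f z}"

definition K :: "(nat \<Rightarrow> complex) \<Rightarrow> (nat \<Rightarrow> complex) set" where
  "K lam = {a \<in> H2. \<forall>b\<in>IH2 lam. H2_inner a b = 0}"

text \<open>L^2(T), represented by Fourier coefficient sequences indexed by the integers.\<close>
definition L2_inner :: "(int \<Rightarrow> complex) \<Rightarrow> (int \<Rightarrow> complex) \<Rightarrow> complex" where
  "L2_inner f g = (\<Sum>\<^sub>\<infinity>m. f m * cnj (g m))"

definition emb :: "(nat \<Rightarrow> complex) \<Rightarrow> int \<Rightarrow> complex" where
  "emb a m = (if m \<ge> 0 then a (nat m) else 0)"

text \<open>Fourier coefficients of the boundary function conj(h) for h in H^2.\<close>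
definition conj_coeffs :: "(nat \<Rightarrow> complex) \<Rightarrow> int \<Rightarrow> complex" where
  "conj_coeffs h m = (if m \<le> 0 then cnj (h (nat (- m))) else 0)"

text \<open>Fourier coefficients of a pointwise product on T (convolution).\<close>
definition conv :: "(int \<Rightarrow> complex) \<Rightarrow> (int \<Rightarrow> complex) \<Rightarrow> int \<Rightarrow> complex" where
  "conv f g m = (\<Sum>\<^sub>\<infinity>k. f k * g (m - k))"

definition P_I :: "(nat \<Rightarrow> complex) \<Rightarrow> (int \<Rightarrow> complex) \<Rightarrow> (nat \<Rightarrow> complex)" where
  "P_I lam g = (THE u. u \<in> K lam \<and> (\<forall>v\<in>K lam. L2_inner (\<lambda>m. g m - emb u m) (emb v) = 0))"

text \<open>A_{conj h} f = P_I (conj h * f), f given by its coefficient sequence.\<close>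
definition A_op :: "(nat \<Rightarrow> complex) \<Rightarrow> (nat \<Rightarrow> complex) \<Rightarrow> (nat \<Rightarrow> complex) \<Rightarrow> (nat \<Rightarrow> complex)" where
  "A_op lam h f = P_I lam (conv (conj_coeffs h) (emb f))"

definition gamma :: "(nat \<Rightarrow> complex) \<Rightarrow> nat \<Rightarrow> complex \<Rightarrow> complex" where
  "gamma lam n z = complex_of_real (sqrt (1 - (cmod (lam n))^2)) / (1 - cnj (lam n) * z)
      * (\<Prod>k\<in>{1..<n}. bfac (lam k) z)"

definition Bsub :: "(nat \<Rightarrow> complex) \<Rightarrow> nat \<Rightarrow> nat \<Rightarrow> complex \<Rightarrow> complex" where
  "Bsub lam n l z = (\<Prod>k\<in>{1..n} - {l}. bfac (lam k) z)"

end

theory Submission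
  imports Defs "HOL-Computational_Algebra.Polynomial"
begin


lemma sum_cmp: fixes f :: "nat \<Rightarrow> 'a::banach" assumes "summable g" "\<And>n. norm (f n) \<le> g n" shows "summable f"
  by (rule summable_comparison_test[OF _ assms(1)]) (use assms(2) in auto)

lemma H2_bound:
  assumes "a \<in> H2" shows "norm (a k) \<le> 1 + (\<Sum>j. (norm (a j))^2)"
proof -
  have s: "summable (\<lambda>j. (norm (a j))^2)" using assms by (simp add: H2_def)
  have "(\<Sum>j\<in>{k}. (norm (a j))^2) \<le> (\<Sum>j. (norm (a j))^2)"
    by (rule sum_le_suminf[OF s]) auto
  hence 1: "(norm (a k))^2 \<le> (\<Sum>j. (norm (a j))^2)" by simp
  have "norm (a k) \<le> 1 + (norm (a k))^2"
  proof (cases "norm (a k) \<le> 1")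
    case True then show ?thesis using zero_le_power2[of "norm (a k)"] by linarith
  next
    case False then have "norm (a k) \<le> norm (a k) * norm (a k)" by (simp add: mult_le_cancel_left1)
    then show ?thesis by (simp add: power2_eq_square)
  qed
  with 1 show ?thesis by linarith
qed

lemma H2_abs_summable:
  assumes "a \<in> H2" "norm z < 1" shows "summable (\<lambda>k. norm (a k * z^k))"
proof -
  define B where "B = 1 + (\<Sum>j. (norm (a j))^2)"
  have S: "summable (\<lambda>k. B * norm z ^ k)" using assms by (intro summable_mult summable_geometric) auto
  have bnd: "norm (norm (a k * z^k)) \<le> B * norm z ^ k" for k
  proof -
    have "norm (norm (a k * z^k)) = norm (a k) * norm z ^ k" by (simp add: norm_mult norm_power)
    also have "\<dots> \<le> B * norm z ^ k" unfolding B_def by (rule mult_right_mono[OF H2_bound[OF assms(1)]]) simp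
    finally show ?thesis .
  qed
  show ?thesis by (rule sum_cmp[OF S bnd])
qed

lemma H2_sums:
  assumes "a \<in> H2" "norm z < 1" shows "(\<lambda>k. a k * z^k) sums hval a z"
  unfolding hval_def by (rule summable_sums[OF summable_norm_cancel[OF H2_abs_summable[OF assms]]])

lemma H2_diff: assumes "a \<in> H2" "b \<in> H2" shows "(\<lambda>k. a k - b k) \<in> H2"
proof -
  have sa: "summable (\<lambda>k. (norm (a k))^2)" and sb: "summable (\<lambda>k. (norm (b k))^2)"
    using assms by (auto simp: H2_def)
  have S: "summable (\<lambda>k. 2 * (norm (a k))^2 + 2 * (norm (b k))^2)"
    by (rule summable_add[OF summable_mult[OF sa] summable_mult[OF sb]])
  have bnd: "norm ((norm (a k - b k))^2) \<le> 2 * (norm (a k))^2 + 2 * (norm (b k))^2" for k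
  proof -
    have "norm (a k - b k) \<le> norm (a k) + norm (b k)" by (rule norm_triangle_ineq4)
    hence "(norm (a k - b k))^2 \<le> (norm (a k) + norm (b k))^2" by (rule power_mono) simp
    also have "\<dots> \<le> 2 * (norm (a k))^2 + 2 * (norm (b k))^2"
      using power2_sum[of "norm (a k)" "norm (b k)"] power2_diff[of "norm (a k)" "norm (b k)"]
        zero_le_power2[of "norm (a k) - norm (b k)"] by linarith
    finally show ?thesis by simp
  qed
  have "summable (\<lambda>k. (norm (a k - b k))^2)" by (rule sum_cmp[OF S bnd])
  then show ?thesis unfolding H2_def by simp
qed

lemma H2_prod_summable: assumes "a \<in> H2" "b \<in> H2" shows "summable (\<lambda>k. a k * cnj (b k))"
proof -
  have sa: "summable (\<lambda>k. (norm (a k))^2)" and sb: "summable (\<lambda>k. (norm (b k))^2)"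
    using assms by (auto simp: H2_def)
  have S: "summable (\<lambda>k. (norm (a k))^2 + (norm (b k))^2)" by (rule summable_add[OF sa sb])
  have bnd: "norm (norm (a k * cnj (b k))) \<le> (norm (a k))^2 + (norm (b k))^2" for k
  proof -
    have h0: "0 \<le> norm (a k) * norm (b k)" by simp
    have h1: "2 * norm (a k) * norm (b k) \<le> (norm (a k))^2 + (norm (b k))^2"
      using power2_diff[of "norm (a k)" "norm (b k)"] zero_le_power2[of "norm (a k) - norm (b k)"] by linarith
    have "norm (a k) * norm (b k) \<le> (norm (a k))^2 + (norm (b k))^2"
      using h0 h1 unfolding mult.assoc by linarith
    then show ?thesis by (simp add: norm_mult)
  qed
  have "summable (\<lambda>k. norm (a k * cnj (b k)))" by (rule sum_cmp[OF S bnd])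
  then show ?thesis by (rule summable_norm_cancel)
qed

lemma powser_unique:
  fixes d :: "nat \<Rightarrow> complex"
  assumes A: "\<And>z. norm z < 1 \<Longrightarrow> (\<lambda>k. d k * z^k) sums 0"
  shows "d k = 0"
proof -
  define P where "P m \<longleftrightarrow> (\<forall>z. z \<noteq> 0 \<longrightarrow> norm z < 1 \<longrightarrow> (\<lambda>k. d (k+m) * z^k) sums 0)" for m
  have D: "d m = 0" if "P m" for m
  proof -
    have sm: "\<And>x. x \<noteq> 0 \<Longrightarrow> norm x < 1 \<Longrightarrow> (\<lambda>k. d (k+m) * x^k) sums 0"
      using that unfolding P_def by blast
    have "((\<lambda>_. 0) \<longlongrightarrow> d (0+m)) (at (0::complex))"
      by (rule powser_limit_0_strong[where s=1 and a="\<lambda>k. d (k+m)" and f="\<lambda>_. 0", OF _ sm]) simp_all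
    then have "0 = d (0+m)" by (rule LIM_const_eq)
    then show ?thesis by simp
  qed
  have step: "P (Suc m)" if Pm: "P m" for m
  proof -
    have dm: "d m = 0" by (rule D[OF Pm])
    show ?thesis unfolding P_def
    proof (intro allI impI)
      fix z :: complex assume z: "z \<noteq> 0" "norm z < 1"
      have "(\<lambda>k. d (k+m) * z^k) sums 0" using Pm z unfolding P_def by blast
      hence "(\<lambda>k. d (Suc k+m) * z^(Suc k)) sums 0"
        using sums_Suc_iff[of "\<lambda>k. d (k+m) * z^k" 0] dm by simp
      hence "(\<lambda>k. (1/z) * (d (Suc k+m) * z^(Suc k))) sums ((1/z) * 0)" by (rule sums_mult)
      moreover have "(1/z) * (d (Suc k+m) * z^(Suc k)) = d (k + Suc m) * z^k" for k
        using z by simp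
      ultimately show "(\<lambda>k. d (k + Suc m) * z^k) sums 0" by simp
    qed
  qed
  have P0: "P 0" unfolding P_def using A by simp
  have "P m" for m by (induction m) (use P0 step in auto)
  then show ?thesis using D by blast
qed



lemma nbfac_bound:
  assumes a: "norm a < 1" and z: "norm z < 1"
  shows "norm (nbfac a z - 1) \<le> (1 - norm a) * ((1 + norm z) / (1 - norm z))"
proof (cases "a = 0")
  case True
  have "norm (z - 1) \<le> 1 + norm z" using norm_triangle_ineq4[of z 1] by simp
  also have "\<dots> \<le> (1 + norm z) / (1 - norm z)"
  proof -
    have "(1 + norm z) * (1 - norm z) \<le> 1 + norm z" by (rule mult_left_le) auto
    then show ?thesis using z by (simp add: le_divide_eq)
  qed
  finally show ?thesis using True by (simp add: nbfac_def)
next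
  case False
  define r where "r = norm a"
  have r0: "r > 0" using False by (simp add: r_def)
  have den: "1 - cnj a * z \<noteq> 0"
  proof
    assume "1 - cnj a * z = 0"
    hence "norm (cnj a * z) = 1" by (metis eq_iff_diff_eq_0 norm_one)
    moreover have "norm (cnj a * z) < 1" using a z mult_strict_mono[of "norm a" 1 "norm z" 1] by (simp add: norm_mult)
    ultimately show False by simp
  qed
  have h: "a * cnj a = of_real r * of_real r" by (simp add: r_def complex_norm_square[symmetric] power2_eq_square)
  have num: "of_real r * (a - z) - a * (1 - cnj a * z) = - (of_real (1 - r) * (a + of_real r * z))"
  proof -
    have "of_real r * (a - z) - a * (1 - cnj a * z) = of_real r * (a - z) - a + (a * cnj a) * z"
      by (simp add: algebra_simps)
    also have "\<dots> = - (of_real (1 - r) * (a + of_real r * z))" unfolding h by (simp add: algebra_simps)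
    finally show ?thesis .
  qed
  have eq: "nbfac a z - 1 = - (of_real (1 - r) * (a + of_real r * z)) / (a * (1 - cnj a * z))"
    unfolding num[symmetric] using False den by (simp add: nbfac_def r_def field_simps)
  have n1: "norm (a + of_real r * z) \<le> r * (1 + norm z)"
    using norm_triangle_ineq[of a "of_real r * z"] r0 by (simp add: norm_mult r_def algebra_simps)
  have n2: "1 - norm z \<le> norm (1 - cnj a * z)"
  proof -
    have "norm (cnj a * z) \<le> norm z" using a by (simp add: norm_mult mult_left_le_one_le)
    moreover have "1 - norm (cnj a * z) \<le> norm (1 - cnj a * z)" using norm_triangle_ineq2[of 1 "cnj a * z"] by simp
    ultimately show ?thesis by linarith
  qed
  have "norm (nbfac a z - 1) = (1 - r) * norm (a + of_real r * z) / (r * norm (1 - cnj a * z))"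
    unfolding eq using a r0 by (simp add: norm_mult norm_divide r_def del: of_real_diff)
  also have "\<dots> \<le> (1 - r) * (r * (1 + norm z)) / (r * (1 - norm z))"
  proof (rule frac_le)
    have r1: "r < 1" using a by (simp add: r_def)
    show "0 \<le> (1 - r) * (r * (1 + norm z))" using r0 r1 by simp
    show "(1 - r) * norm (a + of_real r * z) \<le> (1 - r) * (r * (1 + norm z))"
      using n1 r1 by (simp add: mult_left_mono)
    show "0 < r * (1 - norm z)" using r0 z by simp
    show "r * (1 - norm z) \<le> r * norm (1 - cnj a * z)" using n2 r0 by (simp add: mult_left_mono)
  qed
  also have "\<dots> = (1 - norm a) * ((1 + norm z) / (1 - norm z))" using r0 by (simp add: r_def)
  finally show ?thesis .
qed

lemma blaschke_zero:
  assumes B: "blaschke_seq lam" and l: "l \<ge> 1"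
  shows "blaschke_prod lam (lam l) = 0"
proof -
  define z where "z = lam l"
  have z1: "norm z < 1" using B l by (simp add: blaschke_seq_def z_def)
  define f where "f i = nbfac (lam (Suc i)) z" for i
  define C where "C = (1 + norm z) / (1 - norm z)"
  have "summable (\<lambda>i. (1 - norm (lam (Suc i))) * C)"
    using B by (intro summable_mult2) (simp add: blaschke_seq_def)
  moreover have "norm (norm (f i - 1)) \<le> (1 - norm (lam (Suc i))) * C" for i
    using nbfac_bound[of "lam (Suc i)" z] B z1 by (simp add: f_def C_def blaschke_seq_def)
  ultimately have "summable (\<lambda>i. norm (f i - 1))" by (rule sum_cmp)
  hence "abs_convergent_prod f" by (rule summable_imp_abs_convergent_prod)
  hence "convergent_prod f" by (rule abs_convergent_prod_imp_convergent_prod)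
  then obtain p where p: "f has_prod p" using convergent_prod_imp_has_prod by blast
  have f0: "f (l - 1) = 0" using l by (simp add: f_def z_def nbfac_def)
  have "p = 0" by (rule has_prod_zeroI[OF p f0])
  moreover have "p = prodinf f" using p by (rule has_prod_unique)
  moreover have "f = (\<lambda>i. nbfac (lam (Suc i)) (lam l))" by (rule ext) (simp add: f_def z_def)
  ultimately show ?thesis by (simp add: blaschke_prod_def)
qed

lemma lagrange:
  fixes p :: "complex poly" and mu :: "nat \<Rightarrow> complex"
  assumes fin: "finite S" and inj: "inj_on mu S" and deg: "degree p < card S"
  shows "poly p t = (\<Sum>l\<in>S. poly p (mu l) * (\<Prod>k\<in>S-{l}. (t - mu k) / (mu l - mu k)))"
proof -
  define L where "L = (\<Sum>l\<in>S. smult (poly p (mu l)) (\<Prod>k\<in>S-{l}. smult (1/(mu l - mu k)) [:- mu k, 1:]))"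
  have evalL: "poly L x = (\<Sum>l\<in>S. poly p (mu l) * (\<Prod>k\<in>S-{l}. (x - mu k) / (mu l - mu k)))" for x
    by (auto simp: L_def poly_sum poly_prod diff_divide_distrib intro!: sum.cong prod.cong)
  have degL: "degree L \<le> card S - 1"
    unfolding L_def
  proof (intro degree_sum_le fin)
    fix l assume "l \<in> S"
    have "degree (\<Prod>k\<in>S-{l}. smult (1/(mu l - mu k)) [:- mu k, 1:]) \<le> sum (degree \<circ> (\<lambda>k. smult (1/(mu l - mu k)) [:- mu k, 1:])) (S-{l})"
      by (rule degree_prod_sum_le) (use fin in simp)
    also have "\<dots> = (\<Sum>k\<in>S-{l}. degree (smult (1/(mu l - mu k)) [:- mu k, 1:]))"
      by (simp only: comp_def)
    also have "\<dots> \<le> (\<Sum>k\<in>S-{l}. 1)"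
      by (intro sum_mono) (rule order_trans[OF degree_smult_le], simp)
    also have "\<dots> = card S - 1" using fin \<open>l \<in> S\<close> by simp
    finally show "degree (smult (poly p (mu l)) (\<Prod>k\<in>S-{l}. smult (1/(mu l - mu k)) [:- mu k, 1:])) \<le> card S - 1"
      by (rule order_trans[OF degree_smult_le])
  qed
  have cS: "card (mu ` S) = card S" using inj by (simp add: card_image)
  have "p = L"
  proof (rule poly_eqI_degree[where A="mu ` S"])
    fix x assume "x \<in> mu ` S"
    then obtain j where j: "j \<in> S" "x = mu j" by auto
    have "poly L x = poly p (mu j) * (\<Prod>k\<in>S-{j}. (mu j - mu k) / (mu j - mu k))
        + (\<Sum>l\<in>S-{j}. poly p (mu l) * (\<Prod>k\<in>S-{l}. (mu j - mu k) / (mu l - mu k)))"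
      unfolding evalL j(2) by (rule sum.remove[OF fin j(1)])
    also have "(\<Sum>l\<in>S-{j}. poly p (mu l) * (\<Prod>k\<in>S-{l}. (mu j - mu k) / (mu l - mu k))) = 0"
    proof (intro sum.neutral ballI)
      fix l assume "l \<in> S - {j}"
      hence "(\<Prod>k\<in>S-{l}. (mu j - mu k) / (mu l - mu k)) = 0"
        using fin j(1) by (intro prod_zero) auto
      thus "poly p (mu l) * (\<Prod>k\<in>S-{l}. (mu j - mu k) / (mu l - mu k)) = 0" by simp
    qed
    also have "(\<Prod>k\<in>S-{j}. (mu j - mu k) / (mu j - mu k)) = 1"
    proof (intro prod.neutral ballI)
      fix k assume "k \<in> S - {j}"
      hence "mu j \<noteq> mu k" using inj j(1) by (auto dest: inj_onD)
      thus "(mu j - mu k) / (mu j - mu k) = 1" by simp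
    qed
    finally show "poly p x = poly L x" using j by simp
  next
    show "degree p < card (mu ` S)" using cS deg by simp
  next
    show "degree L < card (mu ` S)" using cS deg degL by linarith
  qed
  then have "poly p t = poly L t" by simp
  also have "\<dots> = (\<Sum>l\<in>S. poly p (mu l) * (\<Prod>k\<in>S-{l}. (t - mu k) / (mu l - mu k)))" by (rule evalL)
  finally show ?thesis .
qed



lemma geo_H2:
  fixes e mu :: "nat \<Rightarrow> complex"
  assumes fin: "finite S" and mu: "\<And>l. l \<in> S \<Longrightarrow> norm (mu l) < 1"
  shows "(\<lambda>k. \<Sum>l\<in>S. e l * mu l ^ k) \<in> H2"
proof -
  define g where "g k = (\<Sum>l\<in>S. norm (e l) * norm (mu l) ^ k)" for k
  define E where "E = (\<Sum>l\<in>S. norm (e l))"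
  have sg: "summable g" unfolding g_def
    by (rule summable_sum, rule summable_mult, rule summable_geometric) (use mu in simp)
  have nb: "norm (\<Sum>l\<in>S. e l * mu l ^ k) \<le> g k" for k
  proof -
    have "norm (\<Sum>l\<in>S. e l * mu l ^ k) \<le> (\<Sum>l\<in>S. norm (e l * mu l ^ k))" by (rule norm_sum)
    also have "\<dots> = g k" by (simp add: g_def norm_mult norm_power)
    finally show ?thesis .
  qed
  have gE: "g k \<le> E" for k
    unfolding g_def E_def
  proof (rule sum_mono)
    fix l assume "l \<in> S"
    have "norm (mu l) ^ k \<le> 1" using mu[OF \<open>l \<in> S\<close>] by (simp add: power_le_one)
    then show "norm (e l) * norm (mu l) ^ k \<le> norm (e l)" by (rule mult_left_le) simp
  qed
  have bnd: "norm ((norm (\<Sum>l\<in>S. e l * mu l ^ k))^2) \<le> E * g k" for k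
  proof -
    have "(norm (\<Sum>l\<in>S. e l * mu l ^ k))^2 = norm (\<Sum>l\<in>S. e l * mu l ^ k) * norm (\<Sum>l\<in>S. e l * mu l ^ k)"
      by (simp add: power2_eq_square)
    also have "\<dots> \<le> E * g k"
      by (rule mult_mono) (use nb[of k] gE[of k] in \<open>auto simp: E_def intro: sum_nonneg\<close>)
    finally show ?thesis by simp
  qed
  have "summable (\<lambda>k. E * g k)" by (rule summable_mult[OF sg])
  hence "summable (\<lambda>k. (norm (\<Sum>l\<in>S. e l * mu l ^ k))^2)" by (rule sum_cmp) (rule bnd)
  then show ?thesis by (simp add: H2_def)
qed

lemma geo_sums:
  fixes e mu :: "nat \<Rightarrow> complex"
  assumes fin: "finite S" and mu: "\<And>l. l \<in> S \<Longrightarrow> norm (mu l) < 1" and z: "norm z < 1"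
  shows "(\<lambda>k. (\<Sum>l\<in>S. e l * mu l ^ k) * z ^ k) sums (\<Sum>l\<in>S. e l / (1 - mu l * z))"
proof -
  have "(\<lambda>k. \<Sum>l\<in>S. e l * (mu l * z) ^ k) sums (\<Sum>l\<in>S. e l * (1 / (1 - mu l * z)))"
  proof (rule sums_sum)
    fix l assume l: "l \<in> S"
    have "norm (mu l * z) < 1" using mu[OF l] z
      by (simp add: norm_mult) (metis mult_strict_mono' norm_ge_zero mult_1_left)
    then show "(\<lambda>k. e l * (mu l * z) ^ k) sums (e l * (1 / (1 - mu l * z)))"
      by (intro sums_mult geometric_sums)
  qed
  moreover have "(\<Sum>l\<in>S. e l * mu l ^ k) * z ^ k = (\<Sum>l\<in>S. e l * (mu l * z) ^ k)" for k
    by (simp add: sum_distrib_right power_mult_distrib mult.assoc)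
  ultimately show ?thesis by simp
qed

lemma geo_hval:
  fixes e mu :: "nat \<Rightarrow> complex"
  assumes fin: "finite S" and mu: "\<And>l. l \<in> S \<Longrightarrow> norm (mu l) < 1" and z: "norm z < 1"
  shows "hval (\<lambda>k. \<Sum>l\<in>S. e l * mu l ^ k) z = (\<Sum>l\<in>S. e l / (1 - mu l * z))"
  unfolding hval_def by (rule sums_unique[symmetric, OF geo_sums[OF fin mu z]])

lemma geo_inner:
  fixes e mu :: "nat \<Rightarrow> complex"
  assumes fin: "finite S" and mu: "\<And>l. l \<in> S \<Longrightarrow> norm (mu l) < 1" and b: "b \<in> H2"
  shows "H2_inner (\<lambda>k. \<Sum>l\<in>S. e l * mu l ^ k) b = (\<Sum>l\<in>S. e l * cnj (hval b (cnj (mu l))))"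
proof -
  have "(\<lambda>k. \<Sum>l\<in>S. e l * (mu l ^ k * cnj (b k))) sums (\<Sum>l\<in>S. e l * cnj (hval b (cnj (mu l))))"
  proof (rule sums_sum)
    fix l assume l: "l \<in> S"
    have "(\<lambda>k. b k * cnj (mu l) ^ k) sums hval b (cnj (mu l))"
      by (rule H2_sums[OF b]) (use mu[OF l] in simp)
    hence "(\<lambda>k. cnj (b k * cnj (mu l) ^ k)) sums cnj (hval b (cnj (mu l)))"
      by (simp only: sums_cnj)
    hence "(\<lambda>k. mu l ^ k * cnj (b k)) sums cnj (hval b (cnj (mu l)))"
      by (simp add: mult.commute)
    then show "(\<lambda>k. e l * (mu l ^ k * cnj (b k))) sums (e l * cnj (hval b (cnj (mu l))))"
      by (rule sums_mult)
  qed
  moreover have "(\<Sum>l\<in>S. e l * mu l ^ k) * cnj (b k) = (\<Sum>l\<in>S. e l * (mu l ^ k * cnj (b k)))" for k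
    by (simp add: sum_distrib_right mult.assoc)
  ultimately show ?thesis unfolding H2_inner_def by (simp add: sums_unique[symmetric])
qed

lemma geo_conv:
  fixes e mu :: "nat \<Rightarrow> complex"
  assumes fin: "finite S" and mu: "\<And>l. l \<in> S \<Longrightarrow> norm (mu l) < 1" and h: "h \<in> H2"
  shows "((\<lambda>j. cnj (h j) * (\<Sum>l\<in>S. e l * mu l ^ (m + j))) has_sum
           (\<Sum>l\<in>S. e l * mu l ^ m * cnj (hval h (cnj (mu l))))) UNIV"
proof -
  define T where "T j = (\<Sum>l\<in>S. (e l * mu l ^ m) * cnj (h j * cnj (mu l) ^ j))" for j
  have eqT: "(\<lambda>j. cnj (h j) * (\<Sum>l\<in>S. e l * mu l ^ (m + j))) = T"
    by (rule ext) (simp add: T_def sum_distrib_left power_add mult_ac)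
  have mu': "norm (cnj (mu l)) < 1" if "l \<in> S" for l using mu[OF that] by simp
  have "T sums (\<Sum>l\<in>S. e l * mu l ^ m * cnj (hval h (cnj (mu l))))"
    unfolding T_def
  proof (rule sums_sum)
    fix l assume l: "l \<in> S"
    have "(\<lambda>j. h j * cnj (mu l) ^ j) sums hval h (cnj (mu l))" by (rule H2_sums[OF h mu'[OF l]])
    hence "(\<lambda>j. cnj (h j * cnj (mu l) ^ j)) sums cnj (hval h (cnj (mu l)))" by (simp only: sums_cnj)
    then show "(\<lambda>j. (e l * mu l ^ m) * cnj (h j * cnj (mu l) ^ j)) sums (e l * mu l ^ m * cnj (hval h (cnj (mu l))))"
      by (rule sums_mult)
  qed
  moreover have "summable (\<lambda>j. norm (T j))"
  proof (rule sum_cmp)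
    show "summable (\<lambda>j. \<Sum>l\<in>S. norm (e l * mu l ^ m) * norm (h j * cnj (mu l) ^ j))"
      by (rule summable_sum, rule summable_mult, rule H2_abs_summable[OF h mu'])
    fix j
    have "norm (norm (T j)) = norm (T j)" by simp
    also have "\<dots> \<le> (\<Sum>l\<in>S. norm ((e l * mu l ^ m) * cnj (h j * cnj (mu l) ^ j)))"
      unfolding T_def by (rule norm_sum)
    also have "\<dots> = (\<Sum>l\<in>S. norm (e l * mu l ^ m) * norm (h j * cnj (mu l) ^ j))"
      by (simp only: norm_mult complex_mod_cnj)
    finally show "norm (norm (T j)) \<le> (\<Sum>l\<in>S. norm (e l * mu l ^ m) * norm (h j * cnj (mu l) ^ j))" .
  qed
  ultimately have "(T has_sum (\<Sum>l\<in>S. e l * mu l ^ m * cnj (hval h (cnj (mu l))))) UNIV"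
    by (intro norm_summable_imp_has_sum)
  then show ?thesis using eqT by simp
qed

lemma conv_emb:
  assumes "m \<ge> 0"
  shows "conv (conj_coeffs h) (emb c) m = infsum (\<lambda>j. cnj (h j) * c (nat m + j)) UNIV"
proof -
  define F where "F = (\<lambda>k. conj_coeffs h k * emb c (m - k))"
  have "conv (conj_coeffs h) (emb c) m = infsum F UNIV" by (simp add: conv_def F_def)
  also have "\<dots> = infsum F (range (\<lambda>j::nat. - int j))"
  proof (rule infsum_cong_neutral)
    fix k assume "k \<in> UNIV - range (\<lambda>j::nat. - int j)"
    hence "k > 0" by (auto simp: image_iff) (metis minus_minus nat_0_le neg_0_le_iff_le of_nat_0 linorder_not_le)
    thus "F k = 0" by (simp add: F_def conj_coeffs_def)
  qed auto
  also have "\<dots> = infsum (F \<circ> (\<lambda>j::nat. - int j)) UNIV"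
    by (rule infsum_reindex) (auto simp: inj_on_def)
  also have "\<dots> = infsum (\<lambda>j. cnj (h j) * c (nat m + j)) UNIV"
  proof (rule infsum_cong)
    fix j :: nat
    have "nat (m + int j) = nat m + j" using assms by simp
    then show "(F \<circ> (\<lambda>j::nat. - int j)) j = cnj (h j) * c (nat m + j)"
      using assms by (simp add: F_def conj_coeffs_def emb_def)
  qed
  finally show ?thesis .
qed

lemma L2_emb: "L2_inner f (emb v) = infsum (\<lambda>n. f (int n) * cnj (v n)) UNIV"
proof -
  define F where "F = (\<lambda>m. f m * cnj (emb v m))"
  have "L2_inner f (emb v) = infsum F UNIV" by (simp add: L2_inner_def F_def)
  also have "\<dots> = infsum F (range int)"
  proof (rule infsum_cong_neutral)
    fix k assume "k \<in> UNIV - range int"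
    hence "k < 0" by (auto simp: image_iff) (metis nonneg_int_cases linorder_not_le)
    thus "F k = 0" by (simp add: F_def emb_def)
  qed auto
  also have "\<dots> = infsum (F \<circ> int) UNIV" by (rule infsum_reindex) auto
  also have "\<dots> = infsum (\<lambda>n. f (int n) * cnj (v n)) UNIV"
    by (rule infsum_cong) (simp add: F_def emb_def)
  finally show ?thesis .
qed



lemma pf_coef:
  fixes lam :: "nat \<Rightarrow> complex"
  assumes lamb: "\<And>k. k \<in> {1..n} \<Longrightarrow> norm (lam k) < 1" and inj: "inj_on lam {1..n}"
    and n: "n \<ge> 1" and l: "l \<in> {1..n}"
  shows "(1 / cnj (Bsub lam n l (lam l))) * ((1 - complex_of_real ((cmod (lam l))^2)) / (1 - cnj (lam l) * lam n))
       = (\<Prod>k\<in>{1..<n}. (1 - lam k * cnj (lam l))) / (\<Prod>k\<in>{1..n}-{l}. (cnj (lam l) - cnj (lam k)))"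
proof -
  define S where "S = {1..n}"
  define Q where "Q = (\<Prod>k\<in>S-{l}. (1 - lam k * cnj (lam l)))"
  define D where "D = (\<Prod>k\<in>S-{l}. (cnj (lam l) - cnj (lam k)))"
  define X where "X = 1 - lam l * cnj (lam l)"
  define Y where "Y = 1 - lam n * cnj (lam l)"
  define Pp where "Pp = (\<Prod>k\<in>{1..<n}. (1 - lam k * cnj (lam l)))"
  have nz: "1 - lam k * cnj (lam l) \<noteq> 0" if "k \<in> S" for k
  proof
    assume "1 - lam k * cnj (lam l) = 0"
    hence "norm (lam k * cnj (lam l)) = 1" by (metis eq_iff_diff_eq_0 norm_one)
    moreover have "norm (lam k * cnj (lam l)) < 1"
      using lamb[of k] lamb[of l] that l mult_strict_mono[of "norm (lam k)" 1 "norm (lam l)" 1]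
      by (simp add: S_def norm_mult)
    ultimately show False by simp
  qed
  have Yn: "Y \<noteq> 0" unfolding Y_def using nz[of n] n by (simp add: S_def)
  have Dk: "\<forall>k\<in>S-{l}. cnj (lam l) - cnj (lam k) \<noteq> 0"
  proof
    fix k assume "k \<in> S - {l}"
    hence "lam l \<noteq> lam k" using inj l by (auto simp: S_def dest: inj_onD)
    thus "cnj (lam l) - cnj (lam k) \<noteq> 0" by simp
  qed
  have Dn: "D \<noteq> 0" unfolding D_def using Dk by (simp add: S_def prod_zero_iff)
  have cB: "cnj (Bsub lam n l (lam l)) = D / Q"
    unfolding Bsub_def D_def Q_def S_def[symmetric] cnj_prod prod_dividef[symmetric]
    by (rule prod.cong) (simp_all add: bfac_def mult.commute)
  have nsq: "1 - complex_of_real ((cmod (lam l))^2) = X" by (simp only: X_def complex_norm_square)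
  have full: "Q * X = Y * Pp"
  proof -
    have "Q * X = (\<Prod>k\<in>S. (1 - lam k * cnj (lam l)))"
    proof -
      have "(\<Prod>k\<in>S. (1 - lam k * cnj (lam l))) = (1 - lam l * cnj (lam l)) * (\<Prod>k\<in>S-{l}. (1 - lam k * cnj (lam l)))"
        by (rule prod.remove) (use l in \<open>simp_all add: S_def\<close>)
      then show ?thesis unfolding Q_def X_def by (simp add: mult.commute)
    qed
    also have "S = insert n {1..<n}" using n by (auto simp: S_def)
    also have "(\<Prod>k\<in>insert n {1..<n}. (1 - lam k * cnj (lam l))) = Y * Pp"
      by (simp add: Y_def Pp_def)
    finally show ?thesis .
  qed
  have "1 / (D / Q) * (X / Y) = (Q * X) / (D * Y)" by simp
  also have "\<dots> = Pp / D" unfolding full using Yn Dn by simp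
  finally have "1 / (D / Q) * (X / Y) = Pp / D" .
  moreover have "1 - cnj (lam l) * lam n = Y" by (simp add: Y_def mult.commute)
  ultimately show ?thesis unfolding cB nsq by (simp add: Pp_def D_def S_def)
qed

lemma pf_poly:
  fixes lam :: "nat \<Rightarrow> complex"
  assumes inj: "inj_on lam {1..n}" and n: "n \<ge> 1"
  shows "(\<Prod>k\<in>{1..<n}. (z - lam k)) =
    (\<Sum>l\<in>{1..n}. (\<Prod>k\<in>{1..<n}. (1 - lam k * cnj (lam l))) / (\<Prod>k\<in>{1..n}-{l}. (cnj (lam l) - cnj (lam k)))
        * (\<Prod>k\<in>{1..n}-{l}. (1 - cnj (lam k) * z)))"
proof -
  define S where "S = {1..n}"
  define mu where "mu k = cnj (lam k)" for k
  define Pp where "Pp t = (\<Prod>k\<in>{1..<n}. (1 - lam k * t))" for t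
  define c where "c l = Pp (mu l) / (\<Prod>k\<in>S-{l}. (mu l - mu k))" for l
  define G where "G z = (\<Prod>k\<in>{1..<n}. (z - lam k)) - (\<Sum>l\<in>S. c l * (\<Prod>k\<in>S-{l}. (1 - mu k * z)))" for z
  have finS: "finite S" by (simp add: S_def)
  have injmu: "inj_on mu S"
  proof (rule inj_onI)
    fix x y assume xy: "x \<in> S" "y \<in> S" "mu x = mu y"
    then have e: "lam x = lam y" by (simp add: mu_def)
    show "x = y" using inj_onD[OF inj e] xy(1,2) by (simp add: S_def)
  qed
  define p where "p = (\<Prod>k\<in>{1..<n}. [:1, - lam k:])"
  have poly_p: "poly p t = Pp t" for t
    unfolding p_def Pp_def poly_prod by (rule prod.cong) (simp_all add: algebra_simps)
  have degp: "degree p < card S"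
  proof -
    have "degree p \<le> sum (degree \<circ> (\<lambda>k. [:1, - lam k:])) {1..<n}"
      unfolding p_def by (rule degree_prod_sum_le) simp
    also have "\<dots> \<le> (\<Sum>k\<in>{1..<n}. 1)" by (rule sum_mono) simp
    also have "\<dots> = n - 1" by simp
    finally show ?thesis using n by (simp add: S_def)
  qed
  have lag: "Pp t = (\<Sum>l\<in>S. Pp (mu l) * (\<Prod>k\<in>S-{l}. (t - mu k) / (mu l - mu k)))" for t
    using lagrange[OF finS injmu degp, of t] by (simp add: poly_p)
  have cardl: "card (S - {l}) = n - 1" if "l \<in> S" for l using that by (simp add: S_def)
  have Gz: "G z = 0" if z: "z \<noteq> 0" for z
  proof -
    have "(\<Prod>k\<in>{1..<n}. (z - lam k)) = (\<Prod>k\<in>{1..<n}. z * (1 - lam k * (1/z)))"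
      by (rule prod.cong) (use z in \<open>simp_all add: field_simps\<close>)
    also have "\<dots> = z ^ (n-1) * Pp (1/z)" by (simp add: prod.distrib Pp_def)
    also have "\<dots> = (\<Sum>l\<in>S. Pp (mu l) * (z ^ (n-1) * (\<Prod>k\<in>S-{l}. (1/z - mu k) / (mu l - mu k))))"
      unfolding lag[of "1/z"] by (simp add: sum_distrib_left mult_ac)
    also have "\<dots> = (\<Sum>l\<in>S. c l * (\<Prod>k\<in>S-{l}. (1 - mu k * z)))"
    proof (rule sum.cong[OF refl])
      fix l assume l: "l \<in> S"
      have "z ^ (n-1) * (\<Prod>k\<in>S-{l}. (1/z - mu k) / (mu l - mu k)) = (\<Prod>k\<in>S-{l}. z * ((1/z - mu k) / (mu l - mu k)))"
        by (simp only: prod.distrib prod_constant cardl[OF l])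
      also have "\<dots> = (\<Prod>k\<in>S-{l}. (1 - mu k * z) / (mu l - mu k))"
      proof (rule prod.cong[OF refl])
        fix k assume k: "k \<in> S - {l}"
        have kS: "k \<in> S" and kl: "k \<noteq> l" using k by auto
        have "mu l \<noteq> mu k"
        proof
          assume "mu l = mu k"
          hence "l = k" by (rule inj_onD[OF injmu _ l kS])
          with kl show False by simp
        qed
        have e1: "z * (1/z - mu k) = 1 - mu k * z" using z by (simp add: right_diff_distrib mult.commute)
        show "z * ((1/z - mu k) / (mu l - mu k)) = (1 - mu k * z) / (mu l - mu k)"
          by (simp only: times_divide_eq_right e1)
      qed
      also have "\<dots> = (\<Prod>k\<in>S-{l}. (1 - mu k * z)) / (\<Prod>k\<in>S-{l}. (mu l - mu k))"
        by (rule prod_dividef)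
      finally have fin: "z ^ (n-1) * (\<Prod>k\<in>S-{l}. (1/z - mu k) / (mu l - mu k)) = (\<Prod>k\<in>S-{l}. (1 - mu k * z)) / (\<Prod>k\<in>S-{l}. (mu l - mu k))" .
      show "Pp (mu l) * (z ^ (n-1) * (\<Prod>k\<in>S-{l}. (1/z - mu k) / (mu l - mu k))) = c l * (\<Prod>k\<in>S-{l}. (1 - mu k * z))"
        unfolding c_def fin by (simp only: times_divide_eq_right times_divide_eq_left mult.commute)
    qed
    finally show ?thesis by (simp add: G_def)
  qed
  have G0: "G 0 = 0"
  proof -
    have "continuous_on UNIV G" unfolding G_def by (intro continuous_intros)
    hence "(G \<longlongrightarrow> G 0) (at 0)" by (simp add: continuous_on_def)
    moreover have "(G \<longlongrightarrow> 0) (at (0::complex))"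
    proof (rule tendsto_eventually)
      show "eventually (\<lambda>z. G z = 0) (at (0::complex))"
        unfolding eventually_at_filter by (simp add: Gz)
    qed
    ultimately show ?thesis by (rule tendsto_unique[OF at_neq_bot])
  qed
  have Gzz: "G z = 0" using Gz G0 by (cases "z = 0") auto
  show ?thesis using Gzz unfolding G_def c_def Pp_def mu_def S_def right_minus_eq .
qed



lemma gamma_pf:
  fixes lam :: "nat \<Rightarrow> complex"
  assumes lamb: "\<And>k. k \<in> {1..n} \<Longrightarrow> norm (lam k) < 1" and inj: "inj_on lam {1..n}"
    and n: "n \<ge> 1" and z: "norm z < 1"
  shows "gamma lam n z = (\<Sum>l\<in>{1..n}. (complex_of_real (sqrt (1 - (cmod (lam n))^2)) *
      ((1 / cnj (Bsub lam n l (lam l))) * ((1 - complex_of_real ((cmod (lam l))^2)) / (1 - cnj (lam l) * lam n))))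
      / (1 - cnj (lam l) * z))"
proof -
  define S where "S = {1..n}"
  define s where "s = complex_of_real (sqrt (1 - (cmod (lam n))^2))"
  define c where "c l = (\<Prod>k\<in>{1..<n}. (1 - lam k * cnj (lam l))) / (\<Prod>k\<in>{1..n}-{l}. (cnj (lam l) - cnj (lam k)))" for l
  define P where "P l = (\<Prod>k\<in>S-{l}. (1 - cnj (lam k) * z))" for l
  define W where "W = (\<Prod>k\<in>S. (1 - cnj (lam k) * z))"
  define N where "N = (\<Prod>k\<in>{1..<n}. (z - lam k))"
  have nz: "1 - cnj (lam k) * z \<noteq> 0" if "k \<in> S" for k
  proof
    assume "1 - cnj (lam k) * z = 0"
    hence "norm (cnj (lam k) * z) = 1" by (metis eq_iff_diff_eq_0 norm_one)
    moreover have "norm (cnj (lam k) * z) < 1"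
      using lamb[of k] that z mult_strict_mono[of "norm (lam k)" 1 "norm z" 1]
      by (simp add: S_def norm_mult)
    ultimately show False by simp
  qed
  have Wn0: "W \<noteq> 0" unfolding W_def using nz by (simp add: S_def prod_zero_iff)
  have Wl: "W = (1 - cnj (lam l) * z) * P l" if l: "l \<in> S" for l
    unfolding W_def P_def by (rule prod.remove) (use l in \<open>simp_all add: S_def\<close>)
  have Pn0: "P l \<noteq> 0" if "l \<in> S" for l using Wl[OF that] Wn0 by auto
  have Sins: "S = insert n {1..<n}" using n by (auto simp: S_def)
  have Wn: "W = (1 - cnj (lam n) * z) * (\<Prod>k\<in>{1..<n}. (1 - cnj (lam k) * z))"
    unfolding W_def Sins by simp
  have "gamma lam n z = s / (1 - cnj (lam n) * z) * (N / (\<Prod>k\<in>{1..<n}. (1 - cnj (lam k) * z)))"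
    unfolding gamma_def s_def N_def bfac_def by (simp only: prod_dividef)
  also have "\<dots> = s * N / W" unfolding Wn by simp
  also have "N = (\<Sum>l\<in>S. c l * P l)"
    unfolding N_def c_def P_def S_def by (rule pf_poly[OF inj n])
  also have "s * (\<Sum>l\<in>S. c l * P l) / W = (\<Sum>l\<in>S. s * c l / (1 - cnj (lam l) * z))"
  proof -
    have "s * (\<Sum>l\<in>S. c l * P l) / W = (\<Sum>l\<in>S. s * (c l * P l) / W)"
      by (simp add: sum_distrib_left sum_divide_distrib)
    also have "\<dots> = (\<Sum>l\<in>S. s * c l / (1 - cnj (lam l) * z))"
    proof (rule sum.cong[OF refl])
      fix l assume l: "l \<in> S"
      have "s * (c l * P l) / W = (s * c l * P l) / ((1 - cnj (lam l) * z) * P l)"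
        unfolding Wl[OF l] by (simp only: mult.assoc)
      also have "\<dots> = s * c l / (1 - cnj (lam l) * z)"
        by (rule mult_divide_mult_cancel_right[OF Pn0[OF l]])
      finally show "s * (c l * P l) / W = s * c l / (1 - cnj (lam l) * z)" .
    qed
    finally show ?thesis .
  qed
  also have "\<dots> = (\<Sum>l\<in>{1..n}. (complex_of_real (sqrt (1 - (cmod (lam n))^2)) *
      ((1 / cnj (Bsub lam n l (lam l))) * ((1 - complex_of_real ((cmod (lam l))^2)) / (1 - cnj (lam l) * lam n))))
      / (1 - cnj (lam l) * z))"
    unfolding S_def
  proof (rule sum.cong[OF refl])
    fix l assume l: "l \<in> {1..n}"
    show "s * c l / (1 - cnj (lam l) * z) = (complex_of_real (sqrt (1 - (cmod (lam n))^2)) *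
      ((1 / cnj (Bsub lam n l (lam l))) * ((1 - complex_of_real ((cmod (lam l))^2)) / (1 - cnj (lam l) * lam n))))
      / (1 - cnj (lam l) * z)"
      unfolding s_def c_def by (subst pf_coef[OF lamb inj n l]) simp_all
  qed
  finally show ?thesis .
qed



theorem corollary3p5:
  fixes lam h :: "nat \<Rightarrow> complex" and n :: nat and \<zeta> :: complex
  assumes "blaschke_seq lam" and "h \<in> H2" and "n \<ge> 1" and "cmod \<zeta> = 1"
  shows "((\<lambda>z. hval (A_op lam h (coeffs (gamma lam n))) z) \<longlongrightarrow>
     complex_of_real (sqrt (1 - (cmod (lam n))^2)) *
       (\<Sum>l=1..n. cnj (hval h (lam l)) / (1 - cnj (lam l) * \<zeta>)
          * (1 / cnj (Bsub lam n l (lam l)))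
          * ((1 - complex_of_real ((cmod (lam l))^2)) / (1 - cnj (lam l) * lam n))))
     (at \<zeta> within ball 0 1)"
proof -
  note B = assms(1) and hH = assms(2) and n = assms(3) and zeta = assms(4)
  have lamb: "\<And>k. k \<in> {1..n} \<Longrightarrow> norm (lam k) < 1" using B by (simp add: blaschke_seq_def)
  have inj: "inj_on lam {1..n}"
  proof -
    have "inj_on lam {1..}" using B by (simp add: blaschke_seq_def)
    moreover have "{1..n} \<subseteq> {1..}" by auto
    ultimately show ?thesis by (rule inj_on_subset)
  qed
  define s where "s = complex_of_real (sqrt (1 - (cmod (lam n))^2))"
  define a where "a l = s * ((1 / cnj (Bsub lam n l (lam l))) * ((1 - complex_of_real ((cmod (lam l))^2)) / (1 - cnj (lam l) * lam n)))" for l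
  define mu where "mu l = cnj (lam l)" for l
  have mu1: "\<And>l. l \<in> {1..n} \<Longrightarrow> norm (mu l) < 1" by (simp add: mu_def lamb)
  have finS: "finite {1..n}" by simp
  define cseq where "cseq = (\<lambda>k. \<Sum>l\<in>{1..n}. a l * mu l ^ k)"
  have cH2: "cseq \<in> H2" unfolding cseq_def by (rule geo_H2[OF finS mu1])
  have gam: "gamma lam n z = hval cseq z" if z: "norm z < 1" for z
  proof -
    have "hval cseq z = (\<Sum>l\<in>{1..n}. a l / (1 - mu l * z))"
      unfolding cseq_def by (rule geo_hval[OF finS mu1 z])
    then show ?thesis using gamma_pf[OF lamb inj n z] by (simp only: a_def s_def mu_def)
  qed
  have coef: "coeffs (gamma lam n) = cseq"
    unfolding coeffs_def
  proof (rule the_equality)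
    show "cseq \<in> H2 \<and> (\<forall>z\<in>ball 0 1. gamma lam n z = hval cseq z)" using cH2 gam by simp
  next
    fix b assume b: "b \<in> H2 \<and> (\<forall>z\<in>ball 0 1. gamma lam n z = hval b z)"
    have "b k - cseq k = 0" for k
    proof (rule powser_unique[of "\<lambda>k. b k - cseq k"])
      fix z :: complex assume z: "norm z < 1"
      have "(\<lambda>k. b k * z^k - cseq k * z^k) sums (hval b z - hval cseq z)"
        using b z by (intro sums_diff H2_sums cH2) auto
      moreover have "hval b z = hval cseq z" using b z gam[OF z] by simp
      ultimately show "(\<lambda>k. (b k - cseq k) * z^k) sums 0" by (simp add: left_diff_distrib)
    qed
    then show "b = cseq" by auto
  qed
  define E where "E l = a l * cnj (hval h (lam l))" for l
  define wseq where "wseq = (\<lambda>k. \<Sum>l\<in>{1..n}. E l * mu l ^ k)"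
  have wH2: "wseq \<in> H2" unfolding wseq_def by (rule geo_H2[OF finS mu1])
  define g where "g = conv (conj_coeffs h) (emb cseq)"
  have gw: "g (int k) = wseq k" for k
  proof -
    have "g (int k) = infsum (\<lambda>j. cnj (h j) * cseq (nat (int k) + j)) UNIV"
      unfolding g_def by (rule conv_emb) simp
    also have "\<dots> = infsum (\<lambda>j. cnj (h j) * (\<Sum>l\<in>{1..n}. a l * mu l ^ (k + j))) UNIV"
      by (simp add: cseq_def)
    also have "\<dots> = (\<Sum>l\<in>{1..n}. a l * mu l ^ k * cnj (hval h (cnj (mu l))))"
      by (rule infsumI[OF geo_conv[OF finS mu1 hH]])
    also have "\<dots> = wseq k" by (simp add: wseq_def E_def mu_def mult_ac)
    finally show ?thesis .
  qed
  have wK: "wseq \<in> K lam"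
    unfolding K_def
  proof (intro CollectI conjI ballI wH2)
    fix b assume b: "b \<in> IH2 lam"
    then have bH: "b \<in> H2" and "\<exists>f\<in>H2. \<forall>z\<in>ball 0 1. hval b z = blaschke_prod lam z * hval f z"
      by (auto simp: IH2_def)
    then obtain f where f: "\<forall>z\<in>ball 0 1. hval b z = blaschke_prod lam z * hval f z" by blast
    have "H2_inner wseq b = (\<Sum>l\<in>{1..n}. E l * cnj (hval b (cnj (mu l))))"
      unfolding wseq_def by (rule geo_inner[OF finS mu1 bH])
    also have "\<dots> = 0"
    proof (rule sum.neutral, rule ballI)
      fix l assume l: "l \<in> {1..n}"
      have "lam l \<in> ball 0 1" using lamb[OF l] by simp
      then have "hval b (lam l) = blaschke_prod lam (lam l) * hval f (lam l)" using f by blast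
      also have "\<dots> = 0" using blaschke_zero[OF B, of l] l by simp
      finally show "E l * cnj (hval b (cnj (mu l))) = 0" by (simp add: mu_def)
    qed
    finally show "H2_inner wseq b = 0" .
  qed
  have orth: "L2_inner (\<lambda>m. g m - emb wseq m) (emb v) = 0" for v
    unfolding L2_emb by (simp add: gw emb_def)
  have uniq: "u = wseq" if u: "u \<in> K lam \<and> (\<forall>v\<in>K lam. L2_inner (\<lambda>m. g m - emb u m) (emb v) = 0)" for u
  proof -
    define d where "d = (\<lambda>k. wseq k - u k)"
    have uH: "u \<in> H2" using u by (simp add: K_def)
    have dH: "d \<in> H2" unfolding d_def by (rule H2_diff[OF wH2 uH])
    have dK: "d \<in> K lam"
      unfolding K_def
    proof (intro CollectI conjI ballI dH)
      fix b assume b: "b \<in> IH2 lam"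
      then have bH: "b \<in> H2" by (simp add: IH2_def)
      have w0: "H2_inner wseq b = 0" using wK b by (simp add: K_def)
      have u0: "H2_inner u b = 0" using u b by (simp add: K_def)
      have "H2_inner d b = (\<Sum>k. wseq k * cnj (b k) - u k * cnj (b k))"
        by (simp add: H2_inner_def d_def left_diff_distrib)
      also have "\<dots> = H2_inner wseq b - H2_inner u b"
        unfolding H2_inner_def by (rule suminf_diff[OF H2_prod_summable[OF wH2 bH] H2_prod_summable[OF uH bH], symmetric])
      finally show "H2_inner d b = 0" using w0 u0 by simp
    qed
    have "0 = L2_inner (\<lambda>m. g m - emb u m) (emb d)" using u dK by simp
    also have "\<dots> = infsum (\<lambda>k. d k * cnj (d k)) UNIV"
      unfolding L2_emb by (simp add: gw emb_def d_def)
    finally have inf0: "infsum (\<lambda>k. d k * cnj (d k)) UNIV = 0" by simp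
    have sd: "summable (\<lambda>k. (norm (d k))^2)" using dH by (simp add: H2_def)
    have eqd: "(\<lambda>k. d k * cnj (d k)) = (\<lambda>k. complex_of_real ((norm (d k))^2))"
      by (rule ext) (simp only: complex_norm_square)
    have "((\<lambda>k. complex_of_real ((norm (d k))^2)) has_sum complex_of_real (\<Sum>k. (norm (d k))^2)) UNIV"
    proof (rule norm_summable_imp_has_sum)
      show "summable (\<lambda>k. norm (complex_of_real ((norm (d k))^2)))" using sd by (simp add: norm_power)
      show "(\<lambda>k. complex_of_real ((norm (d k))^2)) sums complex_of_real (\<Sum>k. (norm (d k))^2)"
        unfolding sums_of_real_iff by (rule summable_sums[OF sd])
    qed
    then have "infsum (\<lambda>k. d k * cnj (d k)) UNIV = complex_of_real (\<Sum>k. (norm (d k))^2)"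
      unfolding eqd by (rule infsumI)
    then have "(\<Sum>k. (norm (d k))^2) = 0" using inf0 by simp
    then have "\<forall>k. (norm (d k))^2 = 0" using suminf_eq_zero_iff[OF sd] by simp
    then have "\<forall>k. d k = 0" by simp
    then show "u = wseq" by (auto simp: d_def)
  qed
  have Aop: "A_op lam h (coeffs (gamma lam n)) = wseq"
    unfolding A_op_def coef P_I_def g_def[symmetric]
  proof (rule the_equality)
    show "wseq \<in> K lam \<and> (\<forall>v\<in>K lam. L2_inner (\<lambda>m. g m - emb wseq m) (emb v) = 0)"
      using wK orth by simp
  next
    fix u assume "u \<in> K lam \<and> (\<forall>v\<in>K lam. L2_inner (\<lambda>m. g m - emb u m) (emb v) = 0)"
    then show "u = wseq" by (rule uniq)
  qed
  have hv: "hval wseq z = (\<Sum>l\<in>{1..n}. E l / (1 - mu l * z))" if zb: "z \<in> ball 0 1" for z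
  proof -
    have zn: "norm z < 1" using zb by (simp add: dist_norm)
    show ?thesis unfolding wseq_def by (rule geo_hval[OF finS mu1 zn])
  qed
  have nzz: "1 - mu l * \<zeta> \<noteq> 0" if l: "l \<in> {1..n}" for l
  proof
    assume "1 - mu l * \<zeta> = 0"
    hence "norm (mu l * \<zeta>) = 1" by (metis eq_iff_diff_eq_0 norm_one)
    moreover have "norm (mu l * \<zeta>) < 1" using mu1[OF l] zeta by (simp add: norm_mult)
    ultimately show False by simp
  qed
  have lim1: "((\<lambda>z. \<Sum>l\<in>{1..n}. E l / (1 - mu l * z)) \<longlongrightarrow> (\<Sum>l\<in>{1..n}. E l / (1 - mu l * \<zeta>))) (at \<zeta> within ball 0 1)"
  proof (rule tendsto_sum)
    fix l assume l: "l \<in> {1..n}"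
    show "((\<lambda>z. E l / (1 - mu l * z)) \<longlongrightarrow> E l / (1 - mu l * \<zeta>)) (at \<zeta> within ball 0 1)"
      by (intro tendsto_intros nzz[OF l])
  qed
  have ev: "eventually (\<lambda>z. (\<Sum>l\<in>{1..n}. E l / (1 - mu l * z)) = hval (A_op lam h (coeffs (gamma lam n))) z) (at \<zeta> within ball 0 1)"
    unfolding Aop eventually_at_filter by (rule always_eventually) (simp add: hv)
  have fin: "complex_of_real (sqrt (1 - (cmod (lam n))^2)) *
       (\<Sum>l=1..n. cnj (hval h (lam l)) / (1 - cnj (lam l) * \<zeta>)
          * (1 / cnj (Bsub lam n l (lam l)))
          * ((1 - complex_of_real ((cmod (lam l))^2)) / (1 - cnj (lam l) * lam n)))
     = (\<Sum>l\<in>{1..n}. E l / (1 - mu l * \<zeta>))"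
    unfolding sum_distrib_left
    by (rule sum.cong[OF refl]) (simp add: E_def a_def s_def mu_def mult_ac)
  show ?thesis unfolding fin using tendsto_cong[OF ev] lim1 by simp
qed


end
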